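(* Let $\mathbf{d}_{\omega} \in \{-1,1\}^M$ be a random vector with independent entries, each $\pm1$ with probability $1/2$, let $\mathbf{f}_\omega\in\mathbb{C}^W$ be fixed, $\mathbf{A}_\omega=\mathbf{d}_\omega\mathbf{f}_\omega^*$, and let $\mathbf{C}\in\mathbb{C}^{M\times W}$ be fixed. Then \[ \mathbb{E}\, |\langle\mathbf{C},\mathbf{A}_{\omega}\rangle|^2 \mathbf{d}_{\omega}\mathbf{d}_{\omega}^* \preccurlyeq 3\|\mathbf{C}\mathbf{f}_{\omega}\|_2^2 \mathbf{I}_M. \]
   Context: $\langle\mathbf{X},\mathbf{Y}\rangle=\mathrm{tr}(\mathbf{X}\mathbf{Y}^* )$ is the trace inner product, $\preccurlyeq$ is the positive semidefinite order, and $\mathbf{I}_M$ is the $M\times M$ identity. In the paper $\mathbf{f}_\omega$ is a column of a partial Fourier matrix. *)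

theory Defs
  imports "HOL-Analysis.Analysis"
begin

definition sign_vectors :: "(real^'m) set" where
  "sign_vectors = {d. \<forall>i. d $ i = 1 \<or> d $ i = -1}"

text \<open>Expectation of a (matrix-valued) function of a uniformly distributed
  sign vector (independent entries, each +1/-1 with probability 1/2).\<close>
definition sign_expectation :: "(real^'m \<Rightarrow> 'a::real_vector) \<Rightarrow> 'a" where
  "sign_expectation g = (1 / real (card (sign_vectors :: (real^'m) set))) *\<^sub>R
      (\<Sum>d\<in>sign_vectors. g d)"

definition trace_inner :: "complex^'n^'m \<Rightarrow> complex^'n^'m \<Rightarrow> complex" where
  "trace_inner X Y = (\<Sum>i\<in>UNIV. \<Sum>j\<in>UNIV. X $ i $ j * cnj (Y $ i $ j))"

definition outer :: "complex^'m \<Rightarrow> complex^'n \<Rightarrow> complex^'n^'m" where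
  "outer x y = (\<chi> i j. x $ i * cnj (y $ j))"

definition psd_le :: "complex^'m^'m \<Rightarrow> complex^'m^'m \<Rightarrow> bool" where
  "psd_le X Y = (\<forall>x :: complex^'m.
     let q = (\<Sum>i\<in>UNIV. \<Sum>j\<in>UNIV. cnj (x $ i) * (Y - X) $ i $ j * x $ j)
     in Im q = 0 \<and> 0 \<le> Re q)"

end

theory Submission
  imports Defs
begin


definition flip :: "'m \<Rightarrow> real^'m \<Rightarrow> real^'m" where
  "flip k d = (\<chi> i. if i = k then - d$i else d$i)"

lemma flip_in: "d \<in> sign_vectors \<Longrightarrow> flip k d \<in> sign_vectors"
  by (auto simp: sign_vectors_def flip_def)

lemma flip_flip: "flip k (flip k d) = d"
  by (simp add: flip_def vec_eq_iff)

lemma sum_flip: "(\<Sum>d\<in>sign_vectors. h (flip k d)) = (\<Sum>d\<in>(sign_vectors::(real^'m) set). h d)"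
proof -
  have "bij_betw (flip k) (sign_vectors::(real^'m) set) sign_vectors"
    by (rule bij_betwI[where g="flip k"]) (auto simp: flip_in flip_flip)
  thus ?thesis by (rule sum.reindex_bij_betw)
qed

lemma m4_zero:
  assumes "a \<noteq> b" "a \<noteq> c" "a \<noteq> e"
  shows "(\<Sum>d\<in>(sign_vectors::(real^'m) set). d$a*d$b*d$c*d$e) = 0"
proof -
  let ?h = "\<lambda>d::real^'m. d$a*d$b*d$c*d$e"
  have "(\<Sum>d\<in>sign_vectors. ?h d) = (\<Sum>d\<in>sign_vectors. ?h (flip a d))"
    by (rule sum_flip[symmetric])
  also have "\<dots> = (\<Sum>d\<in>sign_vectors. - ?h d)"
    using assms by (intro sum.cong) (auto simp: flip_def)
  finally have "(\<Sum>d\<in>sign_vectors. ?h d) = - (\<Sum>d\<in>sign_vectors. ?h d)" by (simp add: sum_negf)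
  thus ?thesis by simp
qed

lemma sv_finite: "finite (sign_vectors :: (real^'m) set)"
proof -
  have "(sign_vectors :: (real^'m) set) = vec_lambda ` (PiE UNIV (\<lambda>_. {-1,1::real}))"
  proof (rule equalityI)
    show "(sign_vectors :: (real^'m) set) \<subseteq> vec_lambda ` (PiE UNIV (\<lambda>_. {-1,1::real}))"
    proof
      fix d :: "real^'m" assume "d \<in> sign_vectors"
      then have "vec_nth d \<in> PiE UNIV (\<lambda>_. {-1,1::real})" by (auto simp: sign_vectors_def)
      then show "d \<in> vec_lambda ` (PiE UNIV (\<lambda>_. {-1,1::real}))"
        by (auto intro!: image_eqI[where x="vec_nth d"])
    qed
  next
    show "vec_lambda ` (PiE UNIV (\<lambda>_. {-1,1::real})) \<subseteq> (sign_vectors::(real^'m) set)"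
      by (auto simp: sign_vectors_def PiE_iff)
  qed
  moreover have "finite (PiE (UNIV::'m set) (\<lambda>_. {-1,1::real}))" by (rule finite_PiE) auto
  ultimately show ?thesis by (metis finite_imageI)
qed

lemma sv_ne: "card (sign_vectors :: (real^'m) set) > 0"
proof -
  have "(1::real^'m) \<in> sign_vectors" by (simp add: sign_vectors_def)
  then show ?thesis using sv_finite card_gt_0_iff by blast
qed

lemma sq1: assumes "d \<in> sign_vectors" shows "d$i * d$i = 1"
proof -
  have "d$i = 1 \<or> d$i = -1" using assms by (simp add: sign_vectors_def)
  thus ?thesis by auto
qed

lemma m4:
  "(\<Sum>d\<in>(sign_vectors::(real^'m) set). d$k*d$l*d$m*d$n) =
     (if (k=l\<and>m=n)\<or>(k=m\<and>l=n)\<or>(k=n\<and>l=m) then real (card (sign_vectors::(real^'m) set)) else 0)"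
proof (cases "(k=l\<and>m=n)\<or>(k=m\<and>l=n)\<or>(k=n\<and>l=m)")
  case True
  have "(\<Sum>d\<in>(sign_vectors::(real^'m) set). d$k*d$l*d$m*d$n) = (\<Sum>d\<in>(sign_vectors::(real^'m) set). 1)"
  proof (rule sum.cong[OF refl])
    fix d :: "real^'m" assume d: "d \<in> sign_vectors"
    have e: "d$k*d$l*d$m*d$n = (d$k*d$l)*(d$m*d$n)" "d$k*d$l*d$m*d$n = (d$k*d$m)*(d$l*d$n)"
      "d$k*d$l*d$m*d$n = (d$k*d$n)*(d$l*d$m)" by (simp_all add: ac_simps)
    have sq: "\<And>i. d$i*d$i = 1" using sq1[OF d] .
    show "d$k*d$l*d$m*d$n = 1" using True 
    proof (elim disjE conjE)
      assume "k=l" "m=n" show ?thesis unfolding e(1) using \<open>k=l\<close> \<open>m=n\<close> by (simp add: sq)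
    next
      assume "k=m" "l=n" show ?thesis unfolding e(2) using \<open>k=m\<close> \<open>l=n\<close> by (simp add: sq)
    next
      assume "k=n" "l=m" show ?thesis unfolding e(3) using \<open>k=n\<close> \<open>l=m\<close> by (simp add: sq)
    qed
  qed
  then show ?thesis using True by simp
next
  case False
  have "(\<Sum>d\<in>(sign_vectors::(real^'m) set). d$k*d$l*d$m*d$n) = 0"
  proof -
    consider "k \<notin> {l,m,n}" | "l \<notin> {k,m,n}" | "m \<notin> {k,l,n}" | "n \<notin> {k,l,m}" using False by auto
    then show ?thesis
    proof cases
      case 1 then show ?thesis by (simp add: m4_zero)
    next
      case 2
      have "(\<Sum>d\<in>(sign_vectors::(real^'m) set). d$k*d$l*d$m*d$n) = (\<Sum>d\<in>(sign_vectors::(real^'m) set). d$l*d$k*d$m*d$n)"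
        by (simp add: ac_simps)
      then show ?thesis using 2 by (simp add: m4_zero)
    next
      case 3
      have "(\<Sum>d\<in>(sign_vectors::(real^'m) set). d$k*d$l*d$m*d$n) = (\<Sum>d\<in>(sign_vectors::(real^'m) set). d$m*d$k*d$l*d$n)"
        by (simp add: ac_simps)
      then show ?thesis using 3 by (simp add: m4_zero)
    next
      case 4
      have "(\<Sum>d\<in>(sign_vectors::(real^'m) set). d$k*d$l*d$m*d$n) = (\<Sum>d\<in>(sign_vectors::(real^'m) set). d$n*d$k*d$l*d$m)"
        by (simp add: ac_simps)
      then show ?thesis using 4 by (simp add: m4_zero)
    qed
  qed
  then show ?thesis by (subst if_not_P[OF False])
qed



lemma expand:
  fixes g x :: "complex^'m" and d :: "real^'m"
  shows "complex_of_real ((cmod (\<Sum>i\<in>UNIV. complex_of_real (d$i) * g$i))\<^sup>2 * (cmod (\<Sum>i\<in>UNIV. complex_of_real (d$i) * x$i))\<^sup>2)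
   = (\<Sum>k\<in>UNIV. \<Sum>l\<in>UNIV. \<Sum>m\<in>UNIV. \<Sum>n\<in>UNIV. complex_of_real (d$k*d$l*d$m*d$n) * (g$k*cnj(g$l)*x$m*cnj(x$n)))"
proof -
  have "complex_of_real ((cmod (\<Sum>i\<in>UNIV. complex_of_real (d$i) * g$i))\<^sup>2 * (cmod (\<Sum>i\<in>UNIV. complex_of_real (d$i) * x$i))\<^sup>2)
    = ((\<Sum>k\<in>UNIV. complex_of_real (d$k) * g$k) * (\<Sum>l\<in>UNIV. complex_of_real (d$l) * cnj (g$l))) *
      ((\<Sum>m\<in>UNIV. complex_of_real (d$m) * x$m) * (\<Sum>n\<in>UNIV. complex_of_real (d$n) * cnj (x$n)))"
    by (simp only: of_real_mult complex_norm_square cnj_sum complex_cnj_mult complex_cnj_complex_of_real)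
  also have "\<dots> = (\<Sum>k\<in>UNIV. \<Sum>m\<in>UNIV. \<Sum>l\<in>UNIV. \<Sum>n\<in>UNIV. complex_of_real (d$k*d$l*d$m*d$n) * (g$k*cnj(g$l)*x$m*cnj(x$n)))"
    apply (simp only: sum_product)
    apply (intro sum.cong refl)
    by (simp add: ac_simps)
  also have "\<dots> = (\<Sum>k\<in>UNIV. \<Sum>l\<in>UNIV. \<Sum>m\<in>UNIV. \<Sum>n\<in>UNIV. complex_of_real (d$k*d$l*d$m*d$n) * (g$k*cnj(g$l)*x$m*cnj(x$n)))"
    by (rule sum.cong[OF refl], rule sum.swap)
  finally show ?thesis .
qed

lemma dl1: "(\<Sum>n\<in>(UNIV::'m::finite set). of_bool (m = n) * h n) = (h m :: complex)"
proof -
  have "(\<Sum>n\<in>(UNIV::'m::finite set). of_bool (m = n) * h n) = (\<Sum>n\<in>(UNIV::'m::finite set). if m = n then h n else 0)"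
    by (intro sum.cong) auto
  thus ?thesis by simp
qed

lemma ind:
  "(if (k=l\<and>m=n)\<or>(k=m\<and>l=n)\<or>(k=n\<and>l=m) then 1 else 0 :: complex) =
    of_bool (k=l) * of_bool (m=n) + of_bool (k=m) * of_bool (l=n) + of_bool (k=n) * of_bool (l=m)
    - 2 * of_bool (k=l) * of_bool (k=m) * of_bool (k=n)"
  by auto

lemma tA:
  fixes a :: "'m::finite \<Rightarrow> 'm \<Rightarrow> 'm \<Rightarrow> 'm \<Rightarrow> complex"
  shows "(\<Sum>k\<in>UNIV. \<Sum>l\<in>UNIV. \<Sum>m\<in>UNIV. \<Sum>n\<in>UNIV. of_bool (k=l) * of_bool (m=n) * a k l m n) = (\<Sum>k\<in>UNIV. \<Sum>m\<in>UNIV. a k k m m)"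
proof -
  have "(\<Sum>k\<in>UNIV. \<Sum>l\<in>UNIV. \<Sum>m\<in>UNIV. \<Sum>n\<in>UNIV. of_bool (k=l) * of_bool (m=n) * a k l m n)
     = (\<Sum>k\<in>UNIV. \<Sum>l\<in>UNIV. \<Sum>m\<in>UNIV. \<Sum>n\<in>UNIV. of_bool (m=n) * (of_bool (k=l) * a k l m n))"
    by (simp add: ac_simps)
  also have "\<dots> = (\<Sum>k\<in>UNIV. \<Sum>l\<in>UNIV. of_bool (k=l) * (\<Sum>m\<in>UNIV. a k l m m))"
    by (simp only: dl1 sum_distrib_left)
  also have "\<dots> = (\<Sum>k\<in>UNIV. \<Sum>m\<in>UNIV. a k k m m)"
    by (simp only: dl1)
  finally show ?thesis .
qed

lemma tB:
  fixes a :: "'m::finite \<Rightarrow> 'm \<Rightarrow> 'm \<Rightarrow> 'm \<Rightarrow> complex"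
  shows "(\<Sum>k\<in>UNIV. \<Sum>l\<in>UNIV. \<Sum>m\<in>UNIV. \<Sum>n\<in>UNIV. of_bool (k=m) * of_bool (l=n) * a k l m n) = (\<Sum>k\<in>UNIV. \<Sum>l\<in>UNIV. a k l k l)"
proof -
  have "(\<Sum>k\<in>UNIV. \<Sum>l\<in>UNIV. \<Sum>m\<in>UNIV. \<Sum>n\<in>UNIV. of_bool (k=m) * of_bool (l=n) * a k l m n)
     = (\<Sum>k\<in>UNIV. \<Sum>l\<in>UNIV. \<Sum>m\<in>UNIV. \<Sum>n\<in>UNIV. of_bool (l=n) * (of_bool (k=m) * a k l m n))"
    by (simp add: ac_simps)
  also have "\<dots> = (\<Sum>k\<in>UNIV. \<Sum>l\<in>UNIV. a k l k l)"
    by (simp only: dl1)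
  finally show ?thesis .
qed

lemma tC:
  fixes a :: "'m::finite \<Rightarrow> 'm \<Rightarrow> 'm \<Rightarrow> 'm \<Rightarrow> complex"
  shows "(\<Sum>k\<in>UNIV. \<Sum>l\<in>UNIV. \<Sum>m\<in>UNIV. \<Sum>n\<in>UNIV. of_bool (k=n) * of_bool (l=m) * a k l m n) = (\<Sum>k\<in>UNIV. \<Sum>l\<in>UNIV. a k l l k)"
proof -
  have "(\<Sum>k\<in>UNIV. \<Sum>l\<in>UNIV. \<Sum>m\<in>UNIV. \<Sum>n\<in>UNIV. of_bool (k=n) * of_bool (l=m) * a k l m n)
     = (\<Sum>k\<in>UNIV. \<Sum>l\<in>UNIV. \<Sum>m\<in>UNIV. \<Sum>n\<in>UNIV. of_bool (k=n) * (of_bool (l=m) * a k l m n))"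
    by (simp add: ac_simps)
  also have "\<dots> = (\<Sum>k\<in>UNIV. \<Sum>l\<in>UNIV. a k l l k)"
    by (simp only: dl1)
  finally show ?thesis .
qed

lemma tD:
  fixes a :: "'m::finite \<Rightarrow> 'm \<Rightarrow> 'm \<Rightarrow> 'm \<Rightarrow> complex"
  shows "(\<Sum>k\<in>UNIV. \<Sum>l\<in>UNIV. \<Sum>m\<in>UNIV. \<Sum>n\<in>UNIV. 2 * of_bool (k=l) * of_bool (k=m) * of_bool (k=n) * a k l m n) = 2 * (\<Sum>k\<in>UNIV. a k k k k)"
proof -
  have "(\<Sum>k\<in>UNIV. \<Sum>l\<in>UNIV. \<Sum>m\<in>UNIV. \<Sum>n\<in>UNIV. 2 * of_bool (k=l) * of_bool (k=m) * of_bool (k=n) * a k l m n)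
     = (\<Sum>k\<in>UNIV. \<Sum>l\<in>UNIV. \<Sum>m\<in>UNIV. \<Sum>n\<in>UNIV. of_bool (k=n) * (of_bool (k=m) * (of_bool (k=l) * (2 * a k l m n))))"
    by (simp add: ac_simps)
  also have "\<dots> = (\<Sum>k\<in>UNIV. 2 * a k k k k)"
    by (simp only: dl1)
  also have "\<dots> = 2 * (\<Sum>k\<in>UNIV. a k k k k)" by (simp add: sum_distrib_left)
  finally show ?thesis .
qed



lemma cs:
  fixes g x :: "complex^'m"
  shows "(cmod (\<Sum>k\<in>UNIV. g$k * x$k))\<^sup>2 \<le> (\<Sum>k\<in>UNIV. (cmod (g$k))\<^sup>2) * (\<Sum>k\<in>UNIV. (cmod (x$k))\<^sup>2)"
proof -
  have "cmod (\<Sum>k\<in>UNIV. g$k * x$k) \<le> (\<Sum>k\<in>UNIV. cmod (g$k) * cmod (x$k))"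
    by (rule order_trans[OF norm_sum]) (simp add: norm_mult)
  then have "(cmod (\<Sum>k\<in>UNIV. g$k * x$k))\<^sup>2 \<le> (\<Sum>k\<in>UNIV. cmod (g$k) * cmod (x$k))\<^sup>2"
    by (intro power_mono) auto
  also have "\<dots> \<le> (\<Sum>k\<in>UNIV. (cmod (g$k))\<^sup>2) * (\<Sum>k\<in>UNIV. (cmod (x$k))\<^sup>2)"
    by (rule Cauchy_Schwarz_ineq_sum)
  finally show ?thesis .
qed

lemma key:
  fixes g x :: "complex^'m"
  shows "(\<Sum>d\<in>(sign_vectors::(real^'m) set). (cmod (\<Sum>i\<in>UNIV. complex_of_real (d$i) * g$i))\<^sup>2 * (cmod (\<Sum>i\<in>UNIV. complex_of_real (d$i) * x$i))\<^sup>2)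
     \<le> 3 * real (card (sign_vectors::(real^'m) set)) * (\<Sum>k\<in>UNIV. (cmod (g$k))\<^sup>2) * (\<Sum>k\<in>UNIV. (cmod (x$k))\<^sup>2)"
proof -
  define N where "N = real (card (sign_vectors::(real^'m) set))"
  define a where "a = (\<lambda>k l m n. g$k*cnj(g$l)*x$m*cnj(x$n))"
  define G where "G = (\<Sum>k\<in>UNIV. (cmod (g$k))\<^sup>2)"
  define X where "X = (\<Sum>k\<in>UNIV. (cmod (x$k))\<^sup>2)"
  define v where "v = (\<Sum>k\<in>UNIV. g$k * x$k)"
  define u where "u = (\<Sum>k\<in>UNIV. g$k * cnj (x$k))"
  define Dr where "Dr = (\<Sum>k\<in>UNIV. (cmod (g$k))\<^sup>2 * (cmod (x$k))\<^sup>2)"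
  define L where "L = (\<Sum>d\<in>(sign_vectors::(real^'m) set). (cmod (\<Sum>i\<in>UNIV. complex_of_real (d$i) * g$i))\<^sup>2 * (cmod (\<Sum>i\<in>UNIV. complex_of_real (d$i) * x$i))\<^sup>2)"
  have "complex_of_real L = (\<Sum>d\<in>(sign_vectors::(real^'m) set). \<Sum>k\<in>UNIV. \<Sum>l\<in>UNIV. \<Sum>m\<in>UNIV. \<Sum>n\<in>UNIV. complex_of_real (d$k*d$l*d$m*d$n) * a k l m n)"
    unfolding L_def a_def of_real_sum by (simp only: expand)
  also have "\<dots> = (\<Sum>k\<in>UNIV. \<Sum>l\<in>UNIV. \<Sum>m\<in>UNIV. \<Sum>n\<in>UNIV. \<Sum>d\<in>(sign_vectors::(real^'m) set). complex_of_real (d$k*d$l*d$m*d$n) * a k l m n)"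
    apply (rule trans[OF sum.swap])
    apply (rule sum.cong[OF refl])
    apply (rule trans[OF sum.swap])
    apply (rule sum.cong[OF refl])
    apply (rule trans[OF sum.swap])
    apply (rule sum.cong[OF refl])
    apply (rule sum.swap)
    done
  also have "\<dots> = (\<Sum>k\<in>UNIV. \<Sum>l\<in>UNIV. \<Sum>m\<in>UNIV. \<Sum>n\<in>UNIV. complex_of_real N *
       ((of_bool (k=l) * of_bool (m=n) * a k l m n + of_bool (k=m) * of_bool (l=n) * a k l m n + of_bool (k=n) * of_bool (l=m) * a k l m n)
    - 2 * of_bool (k=l) * of_bool (k=m) * of_bool (k=n) * a k l m n))"
  proof (intro sum.cong refl)
    fix k l m n :: 'm
    have "(\<Sum>d\<in>(sign_vectors::(real^'m) set). complex_of_real (d$k*d$l*d$m*d$n) * a k l m n)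
       = complex_of_real (\<Sum>d\<in>(sign_vectors::(real^'m) set). d$k*d$l*d$m*d$n) * a k l m n"
      by (simp add: sum_distrib_right of_real_sum)
    also have "\<dots> = complex_of_real N * ((if (k=l\<and>m=n)\<or>(k=m\<and>l=n)\<or>(k=n\<and>l=m) then 1 else 0) * a k l m n)"
      unfolding m4 N_def by simp
    also have "\<dots> = complex_of_real N *
       ((of_bool (k=l) * of_bool (m=n) * a k l m n + of_bool (k=m) * of_bool (l=n) * a k l m n + of_bool (k=n) * of_bool (l=m) * a k l m n)
    - 2 * of_bool (k=l) * of_bool (k=m) * of_bool (k=n) * a k l m n)"
      unfolding ind by (simp add: algebra_simps)
    finally show "(\<Sum>d\<in>(sign_vectors::(real^'m) set). complex_of_real (d$k*d$l*d$m*d$n) * a k l m n) = complex_of_real N *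
       ((of_bool (k=l) * of_bool (m=n) * a k l m n + of_bool (k=m) * of_bool (l=n) * a k l m n + of_bool (k=n) * of_bool (l=m) * a k l m n)
    - 2 * of_bool (k=l) * of_bool (k=m) * of_bool (k=n) * a k l m n)" .
  qed
  also have "\<dots> = complex_of_real N * ((\<Sum>k\<in>UNIV. \<Sum>m\<in>UNIV. a k k m m) + (\<Sum>k\<in>UNIV. \<Sum>l\<in>UNIV. a k l k l)
       + (\<Sum>k\<in>UNIV. \<Sum>l\<in>UNIV. a k l l k) - 2 * (\<Sum>k\<in>UNIV. a k k k k))"
    by (simp only: sum_distrib_left[symmetric] sum.distrib sum_subtractf tA tB tC tD)
  also have "\<dots> = complex_of_real N * (complex_of_real (G * X) + complex_of_real ((cmod v)\<^sup>2)
       + complex_of_real ((cmod u)\<^sup>2) - 2 * complex_of_real Dr)"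
  proof -
    have 1: "(\<Sum>k\<in>UNIV. \<Sum>m\<in>UNIV. a k k m m) = complex_of_real (G * X)"
      unfolding a_def G_def X_def of_real_mult of_real_sum
      by (simp add: sum_product complex_norm_square ac_simps del: of_real_power)
    have 2: "(\<Sum>k\<in>UNIV. \<Sum>l\<in>UNIV. a k l k l) = complex_of_real ((cmod v)\<^sup>2)"
      unfolding a_def v_def complex_norm_square cnj_sum complex_cnj_mult
      by (simp add: sum_product ac_simps)
    have 3: "(\<Sum>k\<in>UNIV. \<Sum>l\<in>UNIV. a k l l k) = complex_of_real ((cmod u)\<^sup>2)"
      unfolding a_def u_def complex_norm_square cnj_sum complex_cnj_mult complex_cnj_cnj
      by (simp add: sum_product ac_simps)
    have 4: "(\<Sum>k\<in>UNIV. a k k k k) = complex_of_real Dr"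
      unfolding a_def Dr_def of_real_sum of_real_mult complex_norm_square
      by (simp add: ac_simps)
    show ?thesis using 1 2 3 4 by simp
  qed
  also have "\<dots> = complex_of_real (N * (G * X + (cmod v)\<^sup>2 + (cmod u)\<^sup>2 - 2 * Dr))"
    by simp
  finally have L: "L = N * (G * X + (cmod v)\<^sup>2 + (cmod u)\<^sup>2 - 2 * Dr)"
    using of_real_eq_iff by blast
  have "(cmod v)\<^sup>2 \<le> G * X" unfolding v_def G_def X_def by (rule cs)
  moreover have "(cmod u)\<^sup>2 \<le> G * X"
    using cs[of g "\<chi> k. cnj (x$k)"] unfolding u_def G_def X_def by simp
  moreover have "Dr \<ge> 0" unfolding Dr_def by (intro sum_nonneg) simp
  moreover have "N \<ge> 0" unfolding N_def by simp
  ultimately have "L \<le> N * (3 * G * X)" unfolding L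
    by (intro mult_left_mono) auto
  then show ?thesis unfolding L_def N_def G_def X_def by (simp add: ac_simps)
qed



lemma tr:
  fixes f :: "complex^'w" and C :: "complex^'w^'m" and d :: "real^'m"
  shows "trace_inner C (outer (\<chi> i. complex_of_real (d $ i)) f) = (\<Sum>i\<in>UNIV. complex_of_real (d$i) * (C *v f)$i)"
  unfolding trace_inner_def outer_def matrix_vector_mult_def
  by (simp add: sum_distrib_left ac_simps)

lemma nsq: fixes y :: "complex^'m" shows "(norm y)\<^sup>2 = (\<Sum>i\<in>UNIV. (cmod (y$i))\<^sup>2)"
  unfolding norm_vec_def L2_set_def by (simp add: sum_nonneg)

theorem lemma4:
  fixes f :: "complex^'w" and C :: "complex^'w^'m"
  shows "psd_le
    (sign_expectation (\<lambda>d :: real^'m.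
        (cmod (trace_inner C (outer (\<chi> i. complex_of_real (d $ i)) f)))\<^sup>2 *\<^sub>R
        outer (\<chi> i. complex_of_real (d $ i)) (\<chi> i. complex_of_real (d $ i))))
    ((3 * (norm (C *v f))\<^sup>2) *\<^sub>R mat 1)"
proof -
  define g where "g = C *v f"
  define N where "N = real (card (sign_vectors::(real^'m) set))"
  define s where "s = (\<lambda>d::real^'m. \<Sum>i\<in>UNIV. complex_of_real (d$i) * g$i)"
  define Xm where "Xm = sign_expectation (\<lambda>d :: real^'m.
        (cmod (trace_inner C (outer (\<chi> i. complex_of_real (d $ i)) f)))\<^sup>2 *\<^sub>R
        outer (\<chi> i. complex_of_real (d $ i)) (\<chi> i. complex_of_real (d $ i)))"
  define G where "G = (\<Sum>k\<in>UNIV. (cmod (g$k))\<^sup>2)"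
  have Xe: "Xm $ i $ j = complex_of_real ((1/N) * (\<Sum>d\<in>(sign_vectors::(real^'m) set). (cmod (s d))\<^sup>2 * (d$i*d$j)))" for i j
    unfolding Xm_def sign_expectation_def tr
    apply (simp only: vector_scaleR_component sum_component)
    apply (simp add: outer_def N_def s_def g_def scaleR_conv_of_real of_real_sum sum_distrib_left)
    done
  have Ye: "((3 * (norm (C *v f))\<^sup>2) *\<^sub>R mat 1 :: complex^'m^'m) $ i $ j = (if i = j then complex_of_real (3 * G) else 0)" for i j
    unfolding G_def g_def nsq
    apply (simp only: vector_scaleR_component)
    apply (simp add: mat_def scaleR_conv_of_real)
    done
  show ?thesis
    unfolding psd_le_def Let_def Xm_def[symmetric]
  proof (intro allI)
    fix x :: "complex^'m"
    define Xn where "Xn = (\<Sum>k\<in>UNIV. (cmod (x$k))\<^sup>2)"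
    define t where "t = (\<lambda>d::real^'m. \<Sum>i\<in>UNIV. complex_of_real (d$i) * x$i)"
    define L where "L = (\<Sum>d\<in>(sign_vectors::(real^'m) set). (cmod (s d))\<^sup>2 * (cmod (t d))\<^sup>2)"
    have q1: "(\<Sum>i\<in>UNIV. \<Sum>j\<in>UNIV. cnj (x $ i) * ((3 * (norm (C *v f))\<^sup>2) *\<^sub>R mat 1 :: complex^'m^'m) $ i $ j * x $ j)
       = complex_of_real (3 * G * Xn)"
    proof -
      have "(\<Sum>i\<in>UNIV. \<Sum>j\<in>UNIV. cnj (x $ i) * ((3 * (norm (C *v f))\<^sup>2) *\<^sub>R mat 1 :: complex^'m^'m) $ i $ j * x $ j)
        = (\<Sum>i\<in>UNIV. \<Sum>j\<in>UNIV. if i = j then cnj (x $ i) * complex_of_real (3 * G) * x $ j else 0)"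
        unfolding Ye by (intro sum.cong refl) simp
      also have "\<dots> = (\<Sum>i\<in>UNIV. complex_of_real (3 * G) * complex_of_real ((cmod (x$i))\<^sup>2))"
        by (simp only: sum.delta finite UNIV_I if_True complex_norm_square) (simp add: ac_simps)
      also have "\<dots> = complex_of_real (3 * G * Xn)"
        unfolding Xn_def by (simp add: sum_distrib_left)
      finally show ?thesis .
    qed
    have q2: "(\<Sum>i\<in>UNIV. \<Sum>j\<in>UNIV. cnj (x $ i) * Xm $ i $ j * x $ j) = complex_of_real ((1/N) * L)"
    proof -
      have "(\<Sum>i\<in>UNIV. \<Sum>j\<in>UNIV. cnj (x $ i) * Xm $ i $ j * x $ j)
        = (\<Sum>i\<in>UNIV. \<Sum>j\<in>UNIV. \<Sum>d\<in>(sign_vectors::(real^'m) set). complex_of_real (1/N) *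
             (complex_of_real ((cmod (s d))\<^sup>2) * ((complex_of_real (d$i) * cnj (x $ i)) * (complex_of_real (d$j) * x $ j))))"
        unfolding Xe of_real_mult of_real_sum
        by (simp add: sum_distrib_left sum_distrib_right ac_simps del: of_real_power)
      also have "\<dots> = (\<Sum>d\<in>(sign_vectors::(real^'m) set). \<Sum>i\<in>UNIV. \<Sum>j\<in>UNIV. complex_of_real (1/N) *
             (complex_of_real ((cmod (s d))\<^sup>2) * ((complex_of_real (d$i) * cnj (x $ i)) * (complex_of_real (d$j) * x $ j))))"
        apply (rule trans[OF sum.cong[OF refl sum.swap]])
        apply (rule sum.swap)
        done
      also have "\<dots> = (\<Sum>d\<in>(sign_vectors::(real^'m) set). complex_of_real (1/N) *
             (complex_of_real ((cmod (s d))\<^sup>2) * (cnj (t d) * t d)))"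
        unfolding t_def cnj_sum complex_cnj_mult complex_cnj_complex_of_real
        by (rule sum.cong[OF refl]) (simp only: sum_product, simp only: sum_distrib_left)
      also have "\<dots> = complex_of_real ((1/N) * L)"
        unfolding L_def of_real_mult of_real_sum complex_norm_square
        by (simp add: sum_distrib_left ac_simps del: of_real_power)
      finally show ?thesis .
    qed
    have "(\<Sum>i\<in>UNIV. \<Sum>j\<in>UNIV. cnj (x $ i) * ((3 * (norm (C *v f))\<^sup>2) *\<^sub>R mat 1 - Xm) $ i $ j * x $ j)
       = (\<Sum>i\<in>UNIV. \<Sum>j\<in>UNIV. cnj (x $ i) * ((3 * (norm (C *v f))\<^sup>2) *\<^sub>R mat 1 :: complex^'m^'m) $ i $ j * x $ j)
         - (\<Sum>i\<in>UNIV. \<Sum>j\<in>UNIV. cnj (x $ i) * Xm $ i $ j * x $ j)"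
      by (simp add: algebra_simps sum_subtractf)
    also have "\<dots> = complex_of_real (3 * G * Xn - (1/N) * L)"
      unfolding q1 q2 by simp
    finally have q: "(\<Sum>i\<in>UNIV. \<Sum>j\<in>UNIV. cnj (x $ i) * ((3 * (norm (C *v f))\<^sup>2) *\<^sub>R mat 1 - Xm) $ i $ j * x $ j)
       = complex_of_real (3 * G * Xn - (1/N) * L)" .
    have "L \<le> 3 * N * G * Xn"
      unfolding L_def N_def G_def Xn_def s_def t_def by (rule key)
    moreover have "N > 0" unfolding N_def using sv_ne by simp
    ultimately have "(1/N) * L \<le> 3 * G * Xn"
      by (simp add: field_simps)
    then show "Im (\<Sum>i\<in>UNIV. \<Sum>j\<in>UNIV. cnj (x $ i) * ((3 * (norm (C *v f))\<^sup>2) *\<^sub>R mat 1 - Xm) $ i $ j * x $ j) = 0 \<and>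
        0 \<le> Re (\<Sum>i\<in>UNIV. \<Sum>j\<in>UNIV. cnj (x $ i) * ((3 * (norm (C *v f))\<^sup>2) *\<^sub>R mat 1 - Xm) $ i $ j * x $ j)"
      unfolding q by simp
  qed
qed

end
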